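(* Let $G_m$ be a bounded Vilenkin group. There is a constant $c$ depending only on $m$ such that the following holds. Let $N\in P_+$, $0\le k\le N-1$, $k+1\le l\le N$, and $x\in I_N^{k,l}$. Then for every integer $n\ge M_N$, $$\int_{I_N}|K_n(x-t)|\,d\mu(t)\le \frac{c\,M_lM_k}{M_N^2}.$$
   Context: Let $m=(m_0,m_1,\dots)$ be integers $m_k\ge2$ with $\sup_km_k<\infty$. $G_m=\prod_k Z_{m_k}$ ($Z_{m_k}=\{0,\dots,m_k-1\}$ with addition mod $m_k$) with the product of uniform probability measures $\mu$; $x-t$ is coordinatewise subtraction mod $m_k$. $M_0=1$, $M_{k+1}=m_kM_k$; every $n\in\mathbb N$ is written uniquely as $n=\sum_jn_jM_j$, $n_j\in Z_{m_j}$. $r_k(x)=\exp(2\pi ix_k/m_k)$, $\psi_n=\prod_kr_k^{n_k}$. Dirichlet kernel $D_n=\sum_{k=0}^{n-1}\psi_k$, Fejér kernel $K_n=\frac1n\sum_{k=0}^{n-1}D_k$ ($n\ge1$). $I_N=\{y\in G_m: y_0=\dots=y_{N-1}=0\}$. For $0\le k<l<N$, $I_N^{k,l}$ is the set of $x\in G_m$ with $x_j=0$ for $j<k$, $x_k\ne0$, $x_j=0$ for $k<j<l$, $x_l\neq0$, and $x_{l+1},\dots,x_{N-1}$ (and all later coordinates) arbitrary; for $l=N$, $I_N^{k,N}$ is the set of $x$ with $x_j=0$ for $j<N$, $j\ne k$, and $x_k\neq0$ (later coordinates arbitrary). *)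

theory Defs
  imports "HOL-Probability.Probability"
begin

fun Mseq :: "(nat \<Rightarrow> nat) \<Rightarrow> nat \<Rightarrow> nat" where
  "Mseq m 0 = 1"
| "Mseq m (Suc k) = m k * Mseq m k"

definition digit :: "(nat \<Rightarrow> nat) \<Rightarrow> nat \<Rightarrow> nat \<Rightarrow> nat" where
  "digit m n j = (n div Mseq m j) mod m j"

definition Vspace :: "(nat \<Rightarrow> nat) \<Rightarrow> (nat \<Rightarrow> nat) set" where
  "Vspace m = PiE UNIV (\<lambda>k. {0..<m k})"

definition Vmeasure :: "(nat \<Rightarrow> nat) \<Rightarrow> (nat \<Rightarrow> nat) measure" where
  "Vmeasure m = PiM UNIV (\<lambda>k. uniform_count_measure {0..<m k})"

definition vsub :: "(nat \<Rightarrow> nat) \<Rightarrow> (nat \<Rightarrow> nat) \<Rightarrow> (nat \<Rightarrow> nat) \<Rightarrow> (nat \<Rightarrow> nat)" where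
  "vsub m x t = (\<lambda>k. (x k + m k - t k) mod m k)"

definition rfun :: "(nat \<Rightarrow> nat) \<Rightarrow> nat \<Rightarrow> (nat \<Rightarrow> nat) \<Rightarrow> complex" where
  "rfun m k x = exp (2 * pi * \<i> * of_nat (x k) / of_nat (m k))"

text \<open>psi_n = prod_k r_k^{n_k}; digits n_k vanish for k >= n since M_k >= 2^k > n.\<close>
definition psi :: "(nat \<Rightarrow> nat) \<Rightarrow> nat \<Rightarrow> (nat \<Rightarrow> nat) \<Rightarrow> complex" where
  "psi m n x = (\<Prod>k<n. rfun m k x ^ digit m n k)"

definition Dir :: "(nat \<Rightarrow> nat) \<Rightarrow> nat \<Rightarrow> (nat \<Rightarrow> nat) \<Rightarrow> complex" where
  "Dir m n x = (\<Sum>k<n. psi m k x)"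

definition Fej :: "(nat \<Rightarrow> nat) \<Rightarrow> nat \<Rightarrow> (nat \<Rightarrow> nat) \<Rightarrow> complex" where
  "Fej m n x = (1 / of_nat n) * (\<Sum>k<n. Dir m k x)"

definition Iset :: "(nat \<Rightarrow> nat) \<Rightarrow> nat \<Rightarrow> (nat \<Rightarrow> nat) set" where
  "Iset m N = {y \<in> Vspace m. \<forall>j<N. y j = 0}"

definition Ikl :: "(nat \<Rightarrow> nat) \<Rightarrow> nat \<Rightarrow> nat \<Rightarrow> nat \<Rightarrow> (nat \<Rightarrow> nat) set" where
  "Ikl m N k l =
     (if l < N then
        {x \<in> Vspace m. (\<forall>j<k. x j = 0) \<and> x k \<noteq> 0 \<and> (\<forall>j. k < j \<and> j < l \<longrightarrow> x j = 0) \<and> x l \<noteq> 0}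
      else
        {x \<in> Vspace m. (\<forall>j<N. j \<noteq> k \<longrightarrow> x j = 0) \<and> x k \<noteq> 0})"

end

theory Submission
  imports Defs
begin



lemma Iset_emb:
  assumes pos: "\<And>k. 0 < m k"
  shows "Iset m N = prod_emb UNIV (\<lambda>k. uniform_count_measure {0..<m k}) {..<N} (PiE {..<N} (\<lambda>_. {0}))"
proof -
  have sp: "space (uniform_count_measure {0..<m k}) = {0..<m k}" for k
    by (simp add: space_uniform_count_measure)
  show ?thesis
    unfolding Iset_def Vspace_def prod_emb_def space_PiM sp
    by (auto simp: PiE_iff restrict_def fun_eq_iff) (metis (full_types))
qed

lemma Iset_meas:
  assumes pos: "\<And>k. 0 < m k"
  shows "Iset m N \<in> sets (Vmeasure m)"
    and "emeasure (Vmeasure m) (Iset m N) = ennreal (1 / real (Mseq m N))"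
proof -
  show "Iset m N \<in> sets (Vmeasure m)"
    unfolding Iset_emb[OF pos] Vmeasure_def
    by (rule sets_PiM_I) (use pos in \<open>auto simp: sets_uniform_count_measure\<close>)
  have "emeasure (Vmeasure m) (Iset m N) = (\<Prod>i\<in>{..<N}. emeasure (uniform_count_measure {0..<m i}) {0})"
    unfolding Iset_emb[OF pos] Vmeasure_def
    apply (rule emeasure_PiM_emb)
    using pos by (auto intro!: prob_space_uniform_count_measure simp: sets_uniform_count_measure)
  also have "\<dots> = (\<Prod>i\<in>{..<N}. ennreal (1 / real (m i)))"
    using pos by (intro prod.cong refl) (simp add: emeasure_uniform_count_measure ennreal_of_nat_eq_real_of_nat divide_ennreal)
  also have "\<dots> = ennreal (\<Prod>i\<in>{..<N}. 1 / real (m i))"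
    by (simp add: prod_ennreal)
  also have "(\<Prod>i\<in>{..<N}. 1 / real (m i)) = 1 / real (Mseq m N)"
    by (induction N) (auto simp: field_simps)
  finally show "emeasure (Vmeasure m) (Iset m N) = ennreal (1 / real (Mseq m N))" .
qed



lemma M_pos: "(\<And>k. 0 < m k) \<Longrightarrow> 0 < Mseq m j"
  by (induction j) auto

lemma M_gt: "(\<And>k. 2 \<le> m k) \<Longrightarrow> j < Mseq m j"
proof (induction j)
  case (Suc j)
  have a: "2 * Mseq m j \<le> m j * Mseq m j" by (rule mult_right_mono) (use Suc.prems in auto)
  have "j < Mseq m j" using Suc by blast
  moreover have "Mseq m (Suc j) = m j * Mseq m j" by simp
  ultimately show ?case using a by linarith
qed simp

lemma M_dvd_lt: "j < p \<Longrightarrow> \<exists>Q. Mseq m p = Mseq m j * (m j * Q)"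
proof (induction p)
  case (Suc p)
  show ?case
  proof (cases "j = p")
    case True then show ?thesis by (intro exI[of _ 1]) simp
  next
    case False
    then obtain Q where "Mseq m p = Mseq m j * (m j * Q)" using Suc by auto
    then show ?thesis by (intro exI[of _ "m p * Q"]) simp
  qed
qed simp

lemma M_dvd_le: "p \<le> j \<Longrightarrow> \<exists>R. Mseq m j = Mseq m p * R"
proof (induction j)
  case (Suc j)
  show ?case
  proof (cases "p = Suc j")
    case True then show ?thesis by (intro exI[of _ 1]) simp
  next
    case False
    then obtain R where "Mseq m j = Mseq m p * R" using Suc by auto
    then show ?thesis by (intro exI[of _ "m j * R"]) simp
  qed
qed simp

lemma M_mono: "(\<And>k. 0 < m k) \<Longrightarrow> p \<le> j \<Longrightarrow> Mseq m p \<le> Mseq m j"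
  using M_dvd_le[of p j m] M_pos[of m j] by (auto simp: mult_le_cancel1 less_eq_Suc_le)

lemma digit_zero: "n < Mseq m j \<Longrightarrow> digit m n j = 0"
  by (simp add: digit_def)

lemma digit_low: assumes "j < p" shows "digit m (c * Mseq m p) j = 0"
proof -
  obtain Q where Q: "Mseq m p = Mseq m j * (m j * Q)" using M_dvd_lt[OF assms] by blast
  show ?thesis
  proof (cases "Mseq m j = 0")
    case True then show ?thesis by (simp add: digit_def)
  next
    case False
    then have "c * Mseq m p div Mseq m j = c * Q * m j" by (simp add: Q)
    then show ?thesis by (simp add: digit_def)
  qed
qed

lemma digit_add:
  assumes pos: "\<And>k. 0 < m k" and b: "b < Mseq m p"
  shows "digit m (c * Mseq m p + b) j = digit m (c * Mseq m p) j + digit m b j"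
proof (cases "j < p")
  case True
  obtain Q where Q: "Mseq m p = Mseq m j * (m j * Q)" using M_dvd_lt[OF True] by blast
  have Mj: "Mseq m j > 0" using M_pos[of m, OF pos] by blast
  have "(c * Mseq m p + b) div Mseq m j = c * Q * m j + b div Mseq m j"
  proof -
    have "c * Mseq m p + b = b + (c * Q * m j) * Mseq m j" by (simp add: Q ac_simps)
    then show ?thesis using Mj by (simp only: div_mult_self1 [OF Mj[THEN gr_implies_not0]])
  qed
  then have "digit m (c * Mseq m p + b) j = digit m b j"
    by (simp add: digit_def)
  then show ?thesis using digit_low[OF True] by simp
next
  case False
  then obtain R where R: "Mseq m j = Mseq m p * R" using M_dvd_le[of p j m] by auto
  have bj: "b < Mseq m j" using b M_mono[of m, OF pos, of p j] False by simp
  have Mp: "Mseq m p > 0" using M_pos[of m, OF pos] by blast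
  have "(c * Mseq m p + b) div Mseq m j = (c * Mseq m p + b) div Mseq m p div R"
    by (simp add: R div_mult2_eq)
  also have "\<dots> = c div R" using Mp b by simp
  also have "\<dots> = (c * Mseq m p) div Mseq m j" using Mp by (simp add: R div_mult2_eq)
  finally show ?thesis using digit_zero[OF bj] by (simp add: digit_def)
qed

lemma psi_L:
  assumes m2: "\<And>k. 2 \<le> m k" and nL: "n \<le> L"
  shows "psi m n x = (\<Prod>j<L. rfun m j x ^ digit m n j)"
  unfolding psi_def
proof (rule prod.mono_neutral_left)
  show "\<forall>i\<in>{..<L} - {..<n}. rfun m i x ^ digit m n i = 1"
  proof
    fix i assume "i \<in> {..<L} - {..<n}"
    then have "n \<le> i" by auto
    then have "n < Mseq m i" using M_gt[of m, OF m2, of i] by simp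
    then show "rfun m i x ^ digit m n i = 1" by (simp add: digit_zero)
  qed
qed (use nL in auto)

lemma psi_mult:
  assumes m2: "\<And>k. 2 \<le> m k" and b: "b < Mseq m p"
  shows "psi m (c * Mseq m p + b) x = psi m (c * Mseq m p) x * psi m b x"
proof -
  have pos: "\<And>k. 0 < m k" using m2 by (metis less_le_trans zero_less_numeral)
  let ?L = "c * Mseq m p + b"
  have "psi m ?L x = (\<Prod>j<?L. rfun m j x ^ digit m ?L j)" by (rule psi_L[OF m2]) simp
  also have "\<dots> = (\<Prod>j<?L. rfun m j x ^ digit m (c * Mseq m p) j * rfun m j x ^ digit m b j)"
    by (simp add: digit_add[OF pos b] power_add)
  also have "\<dots> = psi m (c * Mseq m p) x * psi m b x"
    by (simp add: prod.distrib psi_L[of m, OF m2, of "c * Mseq m p" ?L] psi_L[of m, OF m2, of b ?L])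
  finally show ?thesis .
qed

lemma psi_cong:
  assumes "\<And>j. digit m n j \<noteq> 0 \<Longrightarrow> x j = x' j"
  shows "psi m n x = psi m n x'"
  unfolding psi_def
  by (rule prod.cong[OF refl]) (metis assms power_0 rfun_def)

lemma norm_rfun: "cmod (rfun m k x) = 1"
proof -
  have "2 * pi * \<i> * of_nat (x k) / of_nat (m k) = \<i> * complex_of_real (2 * pi * x k / m k)"
    by simp
  then show ?thesis unfolding rfun_def by (simp only: norm_exp_i_times)
qed

lemma norm_psi: "cmod (psi m n x) = 1"
  by (simp add: psi_def prod_norm[symmetric] norm_power norm_rfun)

lemma norm_Dir: "cmod (Dir m n x) \<le> n"
proof -
  have "cmod (Dir m n x) \<le> (\<Sum>k<n. cmod (psi m k x))" unfolding Dir_def by (rule norm_sum)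
  then show ?thesis by (simp add: norm_psi)
qed




lemma sum_split: "(\<Sum>j<a+(b::nat). g j) = (\<Sum>j<a. g j) + (\<Sum>e<b. g (a+e))"
  by (induction b) (auto simp: add.assoc)

lemma Dir_block:
  assumes m2: "\<And>k. 2 \<le> m k" and b: "b \<le> Mseq m p"
  shows "Dir m (c * Mseq m p + b) x = Dir m (c * Mseq m p) x + psi m (c * Mseq m p) x * Dir m b x"
proof -
  have "Dir m (c * Mseq m p + b) x = Dir m (c * Mseq m p) x + (\<Sum>e<b. psi m (c * Mseq m p + e) x)"
    unfolding Dir_def by (rule sum_split)
  also have "(\<Sum>e<b. psi m (c * Mseq m p + e) x) = (\<Sum>e<b. psi m (c * Mseq m p) x * psi m e x)"
    using b by (intro sum.cong refl psi_mult[OF m2]) auto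
  finally show ?thesis by (simp add: Dir_def sum_distrib_left)
qed

lemma Dir_full:
  assumes m2: "\<And>k. 2 \<le> m k"
  shows "Dir m (c * Mseq m p) x = (\<Sum>c'<c. psi m (c' * Mseq m p) x) * Dir m (Mseq m p) x"
proof (induction c)
  case 0 then show ?case by (simp add: Dir_def)
next
  case (Suc c)
  have "Dir m (Suc c * Mseq m p) x = Dir m (c * Mseq m p + Mseq m p) x" by (simp add: add.commute)
  also have "\<dots> = Dir m (c * Mseq m p) x + psi m (c * Mseq m p) x * Dir m (Mseq m p) x"
    by (rule Dir_block[OF m2]) simp
  finally show ?case using Suc by (simp add: distrib_right)
qed

lemma psi_top:
  assumes m2: "\<And>k. 2 \<le> m k" and c: "c < m q"
  shows "psi m (c * Mseq m q) x = rfun m q x ^ c"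
proof -
  have pos: "\<And>k. 0 < m k" using m2 by (metis less_le_trans zero_less_numeral)
  have dg: "digit m (c * Mseq m q) j = (if j = q then c else 0)" for j
  proof -
    consider "j < q" | "j = q" | "q < j" by arith
    then show ?thesis
    proof cases
      case 1 then show ?thesis using digit_low[OF 1] by simp
    next
      case 2 then show ?thesis using M_pos[of m, OF pos, of q] c by (simp add: digit_def)
    next
      case 3
      have "c * Mseq m q < Mseq m (Suc q)" using c M_pos[of m, OF pos, of q] by simp
      also have "\<dots> \<le> Mseq m j" using 3 M_mono[of m, OF pos, of "Suc q" j] by simp
      finally show ?thesis using 3 digit_zero by auto
    qed
  qed
  let ?L = "Suc q + c * Mseq m q"
  have "psi m (c * Mseq m q) x = (\<Prod>j<?L. rfun m j x ^ digit m (c * Mseq m q) j)"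
    by (rule psi_L[OF m2]) simp
  also have "\<dots> = (\<Prod>j<?L. if j = q then rfun m q x ^ c else 1)"
    by (intro prod.cong refl) (simp add: dg)
  also have "\<dots> = rfun m q x ^ c" by (subst prod.delta) auto
  finally show ?thesis .
qed

lemma Dir_rec:
  assumes m2: "\<And>k. 2 \<le> m k"
  shows "Dir m (Mseq m (Suc q)) x = (\<Sum>c<m q. rfun m q x ^ c) * Dir m (Mseq m q) x"
proof -
  have "Dir m (Mseq m (Suc q)) x = Dir m (m q * Mseq m q) x" by simp
  also have "\<dots> = (\<Sum>c'<m q. psi m (c' * Mseq m q) x) * Dir m (Mseq m q) x" by (rule Dir_full[OF m2])
  also have "(\<Sum>c'<m q. psi m (c' * Mseq m q) x) = (\<Sum>c<m q. rfun m q x ^ c)"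
    by (intro sum.cong refl psi_top[OF m2]) auto
  finally show ?thesis .
qed

lemma geom_zero:
  assumes a: "x q < m q" "x q \<noteq> 0"
  shows "(\<Sum>c<m q. rfun m q x ^ c) = 0"
proof -
  let ?w = "rfun m q x"
  have mq: "m q > 0" using a by simp
  have "?w ^ m q = exp (of_nat (m q) * (2 * pi * \<i> * of_nat (x q) / of_nat (m q)))"
    unfolding rfun_def by (rule exp_of_nat_mult[symmetric])
  also have "of_nat (m q) * (2 * pi * \<i> * of_nat (x q) / of_nat (m q)) = of_nat (x q) * (2 * of_real pi * \<i>)"
    using mq by (simp add: field_simps)
  also have "exp \<dots> = 1" by (simp only: exp_of_nat_mult exp_two_pi_i) simp
  finally have w1: "?w ^ m q = 1" .
  have w2: "?w \<noteq> 1"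
  proof
    assume "?w = 1"
    then obtain n :: int where n: "Im (2 * pi * \<i> * of_nat (x q) / of_nat (m q)) = of_int (2 * n) * pi"
      unfolding rfun_def exp_eq_1 by blast
    have "Im (2 * pi * \<i> * of_nat (x q) / of_nat (m q)) = 2 * pi * (real (x q) / real (m q))"
      by (simp add: Im_divide_of_real[symmetric] del: Im_divide_of_real)
    with n have "2 * pi * (real (x q) / real (m q)) = 2 * pi * of_int n" by (simp add: algebra_simps)
    then have e: "real (x q) / real (m q) = of_int n"
      using mult_left_cancel[of "2 * pi" "real (x q) / real (m q)" "of_int n"] pi_gt_zero by (simp only:)
    have "0 < real (x q) / real (m q)" "real (x q) / real (m q) < 1" using a by auto
    then have "0 < n" "n < 1" unfolding e by simp_all
    then show False by simp
  qed
  show ?thesis using w1 w2 by (simp add: sum_gp_strict)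
qed




lemma Vspace_lt: "x \<in> Vspace m \<Longrightarrow> x j < m j"
  by (auto simp: Vspace_def PiE_def Pi_def)

lemma Dir_vanish:
  assumes m2: "\<And>k. 2 \<le> m k" and x: "x \<in> Vspace m" and j: "j < q" "x j \<noteq> 0"
  shows "Dir m (Mseq m q) x = 0"
  using j
proof (induction q)
  case 0 then show ?case by simp
next
  case (Suc q)
  show ?case
  proof (cases "j = q")
    case True
    have "Dir m (Mseq m (Suc q)) x = (\<Sum>c<m q. rfun m q x ^ c) * Dir m (Mseq m q) x"
      by (rule Dir_rec[OF m2])
    then show ?thesis using geom_zero[of x q m] Vspace_lt[OF x, of q] Suc.prems True
      by simp
  next
    case False
    have "Dir m (Mseq m (Suc q)) x = (\<Sum>c<m q. rfun m q x ^ c) * Dir m (Mseq m q) x"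
      by (rule Dir_rec[OF m2])
    then show ?thesis using Suc False by simp
  qed
qed

lemma psi_low:
  assumes m2: "\<And>k. 2 \<le> m k" and x: "\<forall>j<p. x j = 0" and e: "e < Mseq m p"
  shows "psi m e x = 1"
  unfolding psi_def
proof (rule prod.neutral, rule ballI)
  have pos: "\<And>k. 0 < m k" using m2 by (metis less_le_trans zero_less_numeral)
  fix k assume "k \<in> {..<e}"
  show "rfun m k x ^ digit m e k = 1"
  proof (cases "k < p")
    case True then show ?thesis using x by (simp add: rfun_def)
  next
    case False
    then have "e < Mseq m k" using e M_mono[of m, OF pos, of p k] by simp
    then show ?thesis by (simp add: digit_zero)
  qed
qed

lemma Dir_low:
  assumes m2: "\<And>k. 2 \<le> m k" and x: "\<forall>j<p. x j = 0"
  shows "Dir m (Mseq m p) x = of_nat (Mseq m p)"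
  unfolding Dir_def using psi_low[OF m2 x] by simp

lemma Dir_mod:
  assumes m2: "\<And>k. 2 \<le> m k" and z: "Dir m (Mseq m q) x = 0"
  shows "cmod (Dir m n x) \<le> n mod Mseq m q"
proof -
  let ?M = "Mseq m q"
  have pos: "\<And>k. 0 < m k" using m2 by (metis less_le_trans zero_less_numeral)
  have le: "n mod ?M \<le> ?M" using M_pos[of m, OF pos, of q] by simp
  have "n = (n div ?M) * ?M + n mod ?M" by (rule div_mult_mod_eq[symmetric])
  then have "Dir m n x = Dir m ((n div ?M) * ?M + n mod ?M) x" by simp
  also have "\<dots> = psi m ((n div ?M) * ?M) x * Dir m (n mod ?M) x"
    using Dir_block[where m=m and b="n mod ?M" and p=q and c="n div ?M" and x=x, OF m2] Dir_full[where m=m and c="n div ?M" and p=q and x=x, OF m2] z le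
    by simp
  finally show ?thesis using norm_Dir[of m "n mod ?M" x] by (simp add: norm_mult norm_psi)
qed

lemma Dir_shift:
  assumes m2: "\<And>k. 2 \<le> m k" and z: "Dir m (Mseq m p) x = 0" and e: "e \<le> Mseq m p"
  shows "Dir m (A * Mseq m p + e) x = psi m (A * Mseq m p) x * Dir m e x"
  using Dir_block[where m=m and c=A and x=x, OF m2 e] Dir_full[where m=m and c=A and p=p and x=x, OF m2] z by simp

lemma F_full:
  assumes m2: "\<And>k. 2 \<le> m k" and z: "Dir m (Mseq m p) x = 0"
  shows "(\<Sum>j<A * Mseq m p. Dir m j x) = (\<Sum>c<A. psi m (c * Mseq m p) x) * (\<Sum>e<Mseq m p. Dir m e x)"
proof (induction A)
  case 0 then show ?case by simp
next
  case (Suc A)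
  have "(\<Sum>j<Suc A * Mseq m p. Dir m j x) = (\<Sum>j<A * Mseq m p + Mseq m p. Dir m j x)"
    by (simp add: add.commute)
  also have "\<dots> = (\<Sum>j<A * Mseq m p. Dir m j x) + (\<Sum>e<Mseq m p. Dir m (A * Mseq m p + e) x)"
    by (rule sum_split)
  also have "(\<Sum>e<Mseq m p. Dir m (A * Mseq m p + e) x) = psi m (A * Mseq m p) x * (\<Sum>e<Mseq m p. Dir m e x)"
    by (simp add: sum_distrib_left Dir_shift[OF m2 z])
  finally show ?case using Suc by (simp add: distrib_right)
qed

lemma F_block:
  assumes m2: "\<And>k. 2 \<le> m k" and z: "Dir m (Mseq m p) x = 0" and B: "B \<le> Mseq m p"
  shows "(\<Sum>j<A * Mseq m p + B. Dir m j x) = (\<Sum>c<A. psi m (c * Mseq m p) x) * (\<Sum>e<Mseq m p. Dir m e x)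
           + psi m (A * Mseq m p) x * (\<Sum>e<B. Dir m e x)"
proof -
  have "(\<Sum>j<A * Mseq m p + B. Dir m j x) = (\<Sum>j<A * Mseq m p. Dir m j x) + (\<Sum>e<B. Dir m (A * Mseq m p + e) x)"
    by (rule sum_split)
  also have "(\<Sum>e<B. Dir m (A * Mseq m p + e) x) = psi m (A * Mseq m p) x * (\<Sum>e<B. Dir m e x)"
    using B by (simp add: sum_distrib_left Dir_shift[OF m2 z])
  finally show ?thesis by (simp add: F_full[OF m2 z])
qed

lemma normF: "cmod (\<Sum>e<E. Dir m e x) \<le> real E * real E"
proof -
  have "cmod (\<Sum>e<E. Dir m e x) \<le> (\<Sum>e<E. cmod (Dir m e x))" by (rule norm_sum)
  also have "\<dots> \<le> (\<Sum>e<E. real E)"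
  proof (intro sum_mono)
    fix e assume "e \<in> {..<E}"
    moreover have "cmod (Dir m e x) \<le> real e" by (rule norm_Dir)
    ultimately show "cmod (Dir m e x) \<le> real E" by simp
  qed
  finally show ?thesis by simp
qed




lemma psi_sum_bound1:
  assumes m2: "\<And>k. 2 \<le> m k" and y: "y \<in> Vspace m" and kl: "k < l" and yl: "y l \<noteq> 0"
  shows "cmod (\<Sum>c<A. psi m (c * Mseq m (Suc k)) y) * real (Mseq m (Suc k)) \<le> real (Mseq m (Suc l))"
proof -
  have pos: "\<And>k. 0 < m k" using m2 by (metis less_le_trans zero_less_numeral)
  define y' where "y' = (\<lambda>j. if j \<le> k then 0 else y j)"
  have y'V: "y' \<in> Vspace m" using y pos by (auto simp: y'_def Vspace_def PiE_def Pi_def extensional_def)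
  have eq: "psi m (c * Mseq m (Suc k)) y = psi m (c * Mseq m (Suc k)) y'" for c
  proof (rule psi_cong)
    fix j assume "digit m (c * Mseq m (Suc k)) j \<noteq> 0"
    then have "\<not> j < Suc k" using digit_low by metis
    then show "y j = y' j" by (simp add: y'_def)
  qed
  have low: "Dir m (Mseq m (Suc k)) y' = of_nat (Mseq m (Suc k))"
    by (rule Dir_low[OF m2]) (simp add: y'_def)
  have van: "Dir m (Mseq m (Suc l)) y' = 0"
    by (rule Dir_vanish[OF m2 y'V, of l]) (use kl yl in \<open>auto simp: y'_def\<close>)
  have "Dir m (A * Mseq m (Suc k)) y' = (\<Sum>c<A. psi m (c * Mseq m (Suc k)) y') * of_nat (Mseq m (Suc k))"
    using Dir_full[where m=m and c=A and p="Suc k" and x=y', OF m2] low by simp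
  then have "cmod (\<Sum>c<A. psi m (c * Mseq m (Suc k)) y) * real (Mseq m (Suc k)) = cmod (Dir m (A * Mseq m (Suc k)) y')"
  proof -
    have se: "(\<Sum>c<A. psi m (c * Mseq m (Suc k)) y) = (\<Sum>c<A. psi m (c * Mseq m (Suc k)) y')"
      by (rule sum.cong[OF refl eq])
    show ?thesis using \<open>Dir m (A * Mseq m (Suc k)) y' = _\<close> unfolding se by (simp add: norm_mult del: Mseq.simps)
  qed
  also have "\<dots> \<le> (A * Mseq m (Suc k)) mod Mseq m (Suc l)" by (rule Dir_mod[OF m2 van])
  also have "\<dots> \<le> Mseq m (Suc l)"
  proof -
    have "(A * Mseq m (Suc k)) mod Mseq m (Suc l) < Mseq m (Suc l)"
      by (rule mod_less_divisor[OF M_pos[of m, OF pos]])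
    then show ?thesis by (simp only: of_nat_le_iff)
  qed
  finally show ?thesis .
qed

lemma F_bound:
  assumes m2: "\<And>k. 2 \<le> m k" and y: "y \<in> Vspace m" and yk: "y k \<noteq> 0"
    and H: "\<And>A. A * Mseq m (Suc k) \<le> Bd \<Longrightarrow>
             cmod (\<Sum>c<A. psi m (c * Mseq m (Suc k)) y) * real (Mseq m (Suc k)) \<le> R"
    and PR: "real (Mseq m (Suc k)) \<le> R"
    and B: "B \<le> Bd"
  shows "cmod (\<Sum>j<B. Dir m j y) \<le> 2 * R * real (Mseq m (Suc k))"
proof -
  have pos: "\<And>k. 0 < m k" using m2 by (metis less_le_trans zero_less_numeral)
  let ?P = "Mseq m (Suc k)"
  have P0: "?P > 0" using M_pos[of m, OF pos] by blast
  have z: "Dir m ?P y = 0" by (rule Dir_vanish[OF m2 y, of k]) (use yk in auto)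
  let ?A = "B div ?P" and ?B' = "B mod ?P"
  have Beq: "B = ?A * ?P + ?B'" by (rule div_mult_mod_eq[symmetric])
  have AB: "?A * ?P \<le> Bd" using B Beq by linarith
  have "(\<Sum>j<B. Dir m j y) = (\<Sum>j<?A * ?P + ?B'. Dir m j y)" using Beq by metis
  also have "\<dots> = (\<Sum>c<?A. psi m (c * ?P) y) * (\<Sum>e<?P. Dir m e y) + psi m (?A * ?P) y * (\<Sum>e<?B'. Dir m e y)"
    by (rule F_block[OF m2 z]) (use P0 in simp)
  finally have eqS: "(\<Sum>j<B. Dir m j y) = (\<Sum>c<?A. psi m (c * ?P) y) * (\<Sum>e<?P. Dir m e y) + psi m (?A * ?P) y * (\<Sum>e<?B'. Dir m e y)" .
  have "cmod (\<Sum>j<B. Dir m j y) \<le> cmod (\<Sum>c<?A. psi m (c * ?P) y) * cmod (\<Sum>e<?P. Dir m e y) + cmod (\<Sum>e<?B'. Dir m e y)"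
    unfolding eqS by (rule order_trans[OF norm_triangle_ineq]) (simp add: norm_mult norm_psi del: Mseq.simps)
  also have "\<dots> \<le> cmod (\<Sum>c<?A. psi m (c * ?P) y) * (real ?P * real ?P) + real ?P * real ?P"
  proof (intro add_mono mult_left_mono normF[THEN order_trans])
    have "?B' < ?P" by (rule mod_less_divisor[OF P0])
    then have Bm: "real ?B' \<le> real ?P" by (simp only: of_nat_le_iff less_imp_le)
    show "real ?B' * real ?B' \<le> real ?P * real ?P" using Bm by (intro mult_mono) auto
  qed auto
  also have "\<dots> = (cmod (\<Sum>c<?A. psi m (c * ?P) y) * real ?P) * real ?P + real ?P * real ?P"
    by (simp add: algebra_simps)
  also have "\<dots> \<le> R * real ?P + R * real ?P"
    by (intro add_mono mult_right_mono H[OF AB] PR) auto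
  finally show ?thesis by simp
qed

lemma Fej_bound:
  assumes m2: "\<And>k. 2 \<le> m k" and y: "y \<in> Vspace m" and kN: "k < N" and yk: "y k \<noteq> 0"
    and FB: "\<And>B. B \<le> Mseq m N \<Longrightarrow> cmod (\<Sum>j<B. Dir m j y) \<le> K"
    and n: "Mseq m N \<le> n"
  shows "cmod (Fej m n y) \<le> 2 * K / real (Mseq m N)"
proof -
  have pos: "\<And>k. 0 < m k" using m2 by (metis less_le_trans zero_less_numeral)
  let ?P = "Mseq m N"
  have P0: "?P > 0" using M_pos[of m, OF pos] by blast
  have K0: "0 \<le> K" using FB[of 0] by simp
  have z: "Dir m ?P y = 0" by (rule Dir_vanish[OF m2 y, of k]) (use yk kN in auto)
  let ?A = "n div ?P" and ?B = "n mod ?P"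
  have neq: "n = ?A * ?P + ?B" by (rule div_mult_mod_eq[symmetric])
  have "(\<Sum>j<n. Dir m j y) = (\<Sum>j<?A * ?P + ?B. Dir m j y)" using neq by metis
  also have "\<dots> = (\<Sum>c<?A. psi m (c * ?P) y) * (\<Sum>e<?P. Dir m e y) + psi m (?A * ?P) y * (\<Sum>e<?B. Dir m e y)"
    by (rule F_block[OF m2 z]) (use P0 in simp)
  finally have eqS: "(\<Sum>j<n. Dir m j y) = (\<Sum>c<?A. psi m (c * ?P) y) * (\<Sum>e<?P. Dir m e y) + psi m (?A * ?P) y * (\<Sum>e<?B. Dir m e y)" .
  have "cmod (\<Sum>j<n. Dir m j y) \<le> cmod (\<Sum>c<?A. psi m (c * ?P) y) * cmod (\<Sum>e<?P. Dir m e y) + cmod (\<Sum>e<?B. Dir m e y)"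
    unfolding eqS by (rule order_trans[OF norm_triangle_ineq]) (simp add: norm_mult norm_psi del: Mseq.simps)
  also have "\<dots> \<le> real ?A * K + K"
  proof (intro add_mono mult_mono FB)
    have "cmod (\<Sum>c<?A. psi m (c * ?P) y) \<le> (\<Sum>c<?A. cmod (psi m (c * ?P) y))" by (rule norm_sum)
    then show "cmod (\<Sum>c<?A. psi m (c * ?P) y) \<le> real ?A" by (simp add: norm_psi)
  qed (use P0 K0 in auto)
  finally have S: "cmod (\<Sum>j<n. Dir m j y) \<le> (real ?A + 1) * K" by (simp add: algebra_simps)
  have npos: "0 < n" using n P0 by linarith
  have "(real ?A + 1) * real ?P \<le> 2 * real n"
  proof -
    have "?A * ?P \<le> n" by simp
    then have "real ?A * real ?P \<le> real n" by (metis of_nat_le_iff of_nat_mult)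
    moreover have "real ?P \<le> real n" using n by (simp only: of_nat_le_iff)
    moreover have "(real ?A + 1) * real ?P = real ?A * real ?P + real ?P" by (simp only: distrib_right mult_1)
    ultimately show ?thesis by linarith
  qed
  then have AK: "(real ?A + 1) \<le> 2 * real n / real ?P" using P0 by (simp add: field_simps)
  have "cmod (Fej m n y) = cmod (\<Sum>j<n. Dir m j y) / real n"
    by (simp add: Fej_def norm_mult norm_divide)
  also have "\<dots> \<le> (real ?A + 1) * K / real n" using S npos by (simp add: divide_right_mono)
  also have "\<dots> \<le> (2 * real n / real ?P) * K / real n"
    using AK K0 npos by (intro divide_right_mono mult_right_mono) auto
  also have "\<dots> = 2 * K / real ?P" using npos by (simp add: field_simps)
  finally show ?thesis .
qed


theorem lemma4:
  fixes m :: "nat \<Rightarrow> nat"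
  assumes m_ge2: "\<And>k. m k \<ge> 2"
    and m_bdd: "\<exists>B. \<forall>k. m k \<le> B"
  shows "\<exists>c::real. \<forall>N k l x n. 0 < N \<longrightarrow> k < N \<longrightarrow> k + 1 \<le> l \<longrightarrow> l \<le> N
           \<longrightarrow> x \<in> Ikl m N k l \<longrightarrow> Mseq m N \<le> n \<longrightarrow>
           (\<integral>\<^sup>+ t \<in> Iset m N. ennreal (cmod (Fej m n (vsub m x t))) \<partial>Vmeasure m)
             \<le> ennreal (c * real (Mseq m l) * real (Mseq m k) / real (Mseq m N) ^ 2)"
proof -
  have pos: "\<And>k. 0 < m k" using m_ge2 by (metis less_le_trans zero_less_numeral)
  obtain Bm where Bm: "\<And>k. m k \<le> Bm" using m_bdd by blast
  show ?thesis
  proof (intro exI[of _ "4 * real Bm ^ 2"] allI impI)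
    fix N k l x n
    assume N0: "0 < N" and kN: "k < N" and kl: "k + 1 \<le> l" and lN: "l \<le> N"
      and xI: "x \<in> Ikl m N k l" and n: "Mseq m N \<le> n"
    have xV: "x \<in> Vspace m" and xk: "x k \<noteq> 0" using xI kN by (auto simp: Ikl_def split: if_splits)
    have P0: "0 < Mseq m N" using M_pos[of m, OF pos] by blast
    define C where "C = 4 * real Bm ^ 2 * real (Mseq m l) * real (Mseq m k) / real (Mseq m N)"
    have pt: "cmod (Fej m n (vsub m x t)) \<le> C" if tI: "t \<in> Iset m N" for t
    proof -
      define y where "y = vsub m x t"
      have yV: "y \<in> Vspace m" using pos by (auto simp: y_def vsub_def Vspace_def PiE_def Pi_def extensional_def)
      have yx: "y j = x j" if "j < N" for j
        using tI that Vspace_lt[OF xV, of j] by (auto simp: y_def vsub_def Iset_def)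
      have yk: "y k \<noteq> 0" using yx[OF kN] xk by simp
      let ?R = "real (Mseq m (Suc l))"
      have H: "cmod (\<Sum>c<A. psi m (c * Mseq m (Suc k)) y) * real (Mseq m (Suc k)) \<le> ?R"
        if AP: "A * Mseq m (Suc k) \<le> Mseq m N" for A
      proof (cases "l < N")
        case True
        then have "x l \<noteq> 0" using xI by (simp add: Ikl_def)
        then have "y l \<noteq> 0" using yx[OF True] by simp
        then show ?thesis using psi_sum_bound1[OF m_ge2 yV _ \<open>y l \<noteq> 0\<close>, of k A] kl by simp
      next
        case False
        then have lN': "l = N" using lN by simp
        have "cmod (\<Sum>c<A. psi m (c * Mseq m (Suc k)) y) \<le> (\<Sum>c<A. cmod (psi m (c * Mseq m (Suc k)) y))"
          by (rule norm_sum)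
        then have "cmod (\<Sum>c<A. psi m (c * Mseq m (Suc k)) y) \<le> real A" by (simp add: norm_psi)
        then have "cmod (\<Sum>c<A. psi m (c * Mseq m (Suc k)) y) * real (Mseq m (Suc k)) \<le> real A * real (Mseq m (Suc k))"
          by (rule mult_right_mono) simp
        also have "\<dots> \<le> real (Mseq m N)" using AP by (metis of_nat_le_iff of_nat_mult)
        also have "\<dots> \<le> ?R" using M_mono[of m, OF pos, of N "Suc l"] lN' by (simp only: of_nat_le_iff)
        finally show ?thesis .
      qed
      have PR: "real (Mseq m (Suc k)) \<le> ?R"
        using M_mono[of m, OF pos, of "Suc k" "Suc l"] kl by (simp only: of_nat_le_iff)
      have FB: "cmod (\<Sum>j<B. Dir m j y) \<le> 2 * ?R * real (Mseq m (Suc k))" if "B \<le> Mseq m N" for B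
        by (rule F_bound[OF m_ge2 yV yk H PR that])
      have "cmod (Fej m n y) \<le> 2 * (2 * ?R * real (Mseq m (Suc k))) / real (Mseq m N)"
        by (rule Fej_bound[OF m_ge2 yV kN yk FB n])
      also have "\<dots> \<le> C"
      proof -
        have a: "?R \<le> real Bm * real (Mseq m l)"
          using Bm[of l] by (simp add: mult_right_mono)
        have b: "real (Mseq m (Suc k)) \<le> real Bm * real (Mseq m k)"
          using Bm[of k] by (simp add: mult_right_mono)
        have "?R * real (Mseq m (Suc k)) \<le> (real Bm * real (Mseq m l)) * (real Bm * real (Mseq m k))"
          using a b by (intro mult_mono) auto
        then have "4 * (?R * real (Mseq m (Suc k))) \<le> 4 * ((real Bm * real (Mseq m l)) * (real Bm * real (Mseq m k)))"
          by simp
        then have "2 * (2 * ?R * real (Mseq m (Suc k))) \<le> 4 * real Bm ^ 2 * real (Mseq m l) * real (Mseq m k)"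
          by (simp add: power2_eq_square algebra_simps)
        then show ?thesis unfolding C_def using P0 by (intro divide_right_mono) auto
      qed
      finally show ?thesis by (simp add: y_def)
    qed
    have "(\<integral>\<^sup>+ t \<in> Iset m N. ennreal (cmod (Fej m n (vsub m x t))) \<partial>Vmeasure m)
          \<le> (\<integral>\<^sup>+ t. ennreal C * indicator (Iset m N) t \<partial>Vmeasure m)"
      by (intro nn_integral_mono) (auto simp: indicator_def intro!: ennreal_leI pt)
    also have "\<dots> = ennreal C * emeasure (Vmeasure m) (Iset m N)"
      by (rule nn_integral_cmult_indicator[OF Iset_meas(1)[OF pos]])
    also have "\<dots> = ennreal C * ennreal (1 / real (Mseq m N))" by (simp add: Iset_meas(2)[OF pos])
    also have "\<dots> = ennreal (C * (1 / real (Mseq m N)))"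
      by (rule ennreal_mult''[symmetric]) simp
    also have "C * (1 / real (Mseq m N)) = 4 * real Bm ^ 2 * real (Mseq m l) * real (Mseq m k) / real (Mseq m N) ^ 2"
      by (simp add: C_def power2_eq_square)
    finally show "(\<integral>\<^sup>+ t \<in> Iset m N. ennreal (cmod (Fej m n (vsub m x t))) \<partial>Vmeasure m)
             \<le> ennreal (4 * real Bm ^ 2 * real (Mseq m l) * real (Mseq m k) / real (Mseq m N) ^ 2)" .
  qed
qed

end
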